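(* Let $N\ge3$ be odd, $n\ge1$, $\tilde J>0$, $J_i=\tilde J/N^i$ for $1\le i\le n$, and let $0\le m\le n-1$ and $1\le s\le N$ be integers. Write $H_i=\mathcal H(h^{(m,s)};\gamma_i)$. If $s$ is odd, then $$H_{\lfloor sN^m/2\rfloor}=H_{\lfloor sN^m/2\rfloor+1}=\max_{1\le i\le sN^m}H_i=\max_{1\le i\le N^n}H_i,$$ and $H_i<H_{\lfloor sN^m/2\rfloor}$ for all $0\le i<\lfloor sN^m/2\rfloor$. If $s$ is even, then $$H_{\lfloor(s-1)N^m/2\rfloor+1}=\max_{1\le i\le sN^m}H_i=\max_{1\le i\le N^n}H_i,$$ and $H_i<H_{\lfloor(s-1)N^m/2\rfloor+1}$ for all $0\le i<\lfloor(s-1)N^m/2\rfloor+1$.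
   Context: Hierarchical lattice $\Lambda_N^n=\{1,\dots,N^n\}$; $k$-blocks are $\{jN^k+1,\dots,(j+1)N^k\}$; $d(a,b)$ is the smallest $k\ge0$ with $a,b$ in a common $k$-block. For a field $h$, $\mathcal H(h;\sigma)=-\frac12\sum_{\{v,w\},v\ne w}J_{d(v,w)}\sigma(v)\sigma(w)-\frac h2\sum_v\sigma(v)$ (unordered pairs). $\gamma_k$ is the configuration with $+1$ exactly on $\{1,\dots,k\}$ ($0\le k\le N^n$). $h^{(m,s)}=\tilde J\big[(1-\frac1N)(n-m)-(s-1)\frac1N\big]$. *)

theory Defs
  imports Complex_Main
begin

text \<open>Hierarchical lattice {1..N^n}. Sites a, b lie in a common k-block
  {j N^k + 1, ..., (j+1) N^k} iff (a-1) div N^k = (b-1) div N^k.\<close>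

definition hdist :: "nat \<Rightarrow> nat \<Rightarrow> nat \<Rightarrow> nat" where
  "hdist N a b = (LEAST k. (a - 1) div N ^ k = (b - 1) div N ^ k)"

definition gamma :: "nat \<Rightarrow> nat \<Rightarrow> real" where
  "gamma k v = (if v \<le> k then 1 else -1)"

text \<open>Hamiltonian H(h; sigma), sum over unordered pairs {v,w}, v \<noteq> w, written as v < w.\<close>
definition hamil :: "nat \<Rightarrow> nat \<Rightarrow> (nat \<Rightarrow> real) \<Rightarrow> real \<Rightarrow> (nat \<Rightarrow> real) \<Rightarrow> real" where
  "hamil N n J h \<sigma> =
     - (1/2) * (\<Sum>v\<in>{1..N ^ n}. \<Sum>w\<in>{v<..N ^ n}. J (hdist N v w) * \<sigma> v * \<sigma> w)
     - h / 2 * (\<Sum>v\<in>{1..N ^ n}. \<sigma> v)"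

definition hfield :: "nat \<Rightarrow> nat \<Rightarrow> real \<Rightarrow> nat \<Rightarrow> nat \<Rightarrow> real" where
  "hfield N n Jt m s = Jt * ((1 - 1 / real N) * (real n - real m) - (real s - 1) / real N)"

end

theory Submission
  imports Defs
begin


function ds :: "nat \<Rightarrow> nat \<Rightarrow> nat" where
  "ds N k = (if N < 2 \<or> k = 0 then 0 else k mod N + ds N (k div N))"
  by auto
termination by (relation "measure snd") auto

declare ds.simps[simp del]

lemma ds0[simp]: "ds N 0 = 0" by (simp add: ds.simps)

lemma ds_step: assumes "N \<ge> 2" "d < N" shows "ds N (N*q + d) = d + ds N q"
proof (cases "N*q+d = 0")
  case True then show ?thesis using assms by auto
next
  case False
  have "(N*q+d) mod N = d" "(N*q+d) div N = q" using assms by auto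
  then show ?thesis using assms False by (subst ds.simps) auto
qed

lemma ds_small: "N \<ge> 2 \<Longrightarrow> k < N \<Longrightarrow> ds N k = k"
  using ds_step[of N k 0] by simp

definition gs :: "nat \<Rightarrow> real \<Rightarrow> nat \<Rightarrow> real" where
  "gs N T k = (\<Sum>i<k. T - real (ds N i))"

lemma gs_Suc: "gs N T (Suc k) = gs N T k + (T - real (ds N k))"
  by (simp add: gs_def)

lemma sum_split_add: "(\<Sum>a<M+(d::nat). f a) = (\<Sum>a<M. f a) + (\<Sum>e<d. f (M+e))"
  by (induction d) (auto simp: add.assoc)

lemma sum_blocks: "(\<Sum>a<N*(q::nat) + d. f a) = (\<Sum>a'<q. \<Sum>e<N. f (N*a'+e)) + (\<Sum>e<d. f (N*q+e))"
proof -
  have "(\<Sum>a<N*q. f a) = (\<Sum>a'<q. \<Sum>e<N. f (N*a'+e))"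
  proof (induction q)
    case 0 then show ?case by simp
  next
    case (Suc q)
    have "N * Suc q = N*q + N" by simp
    then show ?case using Suc by (simp only: sum_split_add) simp
  qed
  then show ?thesis by (simp add: sum_split_add)
qed

lemma sum_lin: "(\<Sum>e<d. X - real e) = real d * X - real d * (real d - 1) / 2"
  by (induction d) (auto simp: field_simps)

lemma gs_rec:
  assumes "N \<ge> 2" "d < N"
  shows "gs N T (N*q+d) = real N * gs N (T - (real N - 1)/2) q
            + real d * (T - real (ds N q)) - real d * (real d - 1) / 2"
proof -
  have in1: "(\<Sum>e<N. T - real (ds N (N*a'+e))) = real N * (T - (real N - 1)/2 - real (ds N a'))" for a'
  proof -
    have "(\<Sum>e<N. T - real (ds N (N*a'+e))) = (\<Sum>e<N. (T - real (ds N a')) - real e)"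
      using assms by (intro sum.cong) (auto simp: ds_step)
    also have "\<dots> = real N * (T - (real N - 1)/2 - real (ds N a'))" by (subst sum_lin) (simp add: field_simps)
    finally show ?thesis .
  qed
  have in2: "(\<Sum>e<d. T - real (ds N (N*q+e))) = (\<Sum>e<d. (T - real (ds N q)) - real e)"
    using assms by (intro sum.cong) (auto simp: ds_step)
  show ?thesis
    unfolding gs_def sum_blocks in1 in2 sum_lin by (simp add: sum_distrib_left)
qed

lemma gs_interp:
  assumes N: "N = 2*c+1" and "d < N" and c1: "c \<ge> 1"
  shows "gs N T (N*q+d) = (real N - real d) * gs N (T - real c) q + real d * gs N (T - real c) (Suc q)
           + real d * real c - real d * (real d - 1) / 2"
proof -
  have c': "(real N - 1)/2 = real c" using N by simp
  have N2: "N \<ge> 2" using N c1 by simp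
  have e: "gs N T (N*q+d) = real N * gs N (T - real c) q + real d*(T - real (ds N q)) - real d*(real d-1)/2"
    using gs_rec[OF N2 assms(2), of T q] unfolding c' .
  have f: "gs N (T - real c) (Suc q) = gs N (T - real c) q + (T - real c - real (ds N q))" by (simp add: gs_Suc)
  show ?thesis unfolding e f by (simp add: algebra_simps)
qed

lemma prod_nonneg_int: "0 \<le> (real c - real d) * (real c - real d + 1)"
proof (cases "d \<le> c")
  case True
  then have "0 \<le> real c - real d" by simp
  then show ?thesis by (intro mult_nonneg_nonneg) auto
next
  case False
  then have "real c - real d \<le> -1" by simp
  then show ?thesis by (intro mult_nonpos_nonpos) auto
qed

lemma psi_id: "real c * (real c + 1) / 2 - (real d * real c - real d * (real d - 1) / 2)
   = (real c - real d) * (real c - real d + 1) / 2"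
  by (simp add: field_simps)

lemma psi_le: "real d * real c - real d * (real d - 1) / 2 \<le> real c * (real c + 1) / 2"
  using prod_nonneg_int[of c d] psi_id[of c d] by linarith

lemma psi_lt: "d < c \<Longrightarrow> real d * real c - real d * (real d - 1) / 2 < real c * (real c + 1) / 2"
proof -
  assume "d < c"
  then have "0 < (real c - real d) * (real c - real d + 1)" by (intro mult_pos_pos) auto
  then show ?thesis using psi_id[of c d] by linarith
qed

lemma gs_nonpos: "T \<le> 0 \<Longrightarrow> gs N T k \<le> 0"
  unfolding gs_def by (intro sum_nonpos) auto


lemma base_le:
  assumes N: "N = 2*c+1" "c \<ge> 1" and T: "T \<le> real c" and p: "p < N"
    and psile: "\<And>d::nat. real d * T - real d*(real d - 1)/2 \<le> real p * T - real p*(real p-1)/2"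
    and psilt: "\<And>d::nat. d < p \<Longrightarrow> real d * T - real d*(real d - 1)/2 < real p * T - real p*(real p-1)/2"
  shows "gs N T k \<le> gs N T p" "k < p \<Longrightarrow> gs N T k < gs N T p"
proof -
  have N2: "N \<ge> 2" using N by simp
  have c': "(real N - 1)/2 = real c" using N by simp
  have small: "gs N T j = real j * T - real j*(real j - 1)/2" if "j < N" for j
    using gs_rec[OF N2 that, of T 0] by (simp add: gs_def)
  have gp: "gs N T p = real p * T - real p*(real p-1)/2" using small p by simp
  define q where "q = k div N"
  define d where "d = k mod N"
  have Npos: "N > 0" using N by simp
  have k: "k = N*q + d" "d < N" using Npos unfolding q_def d_def by auto
  have g: "gs N T k = real N * gs N (T - real c) q + real d * (T - real (ds N q)) - real d * (real d - 1) / 2"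
    using gs_rec[OF N2 k(2), of T q] c' k(1) by simp
  have "gs N (T - real c) q \<le> 0" using T by (intro gs_nonpos) simp
  then have "real N * gs N (T - real c) q \<le> 0" by (simp add: mult_nonneg_nonpos)
  moreover have "real d * (T - real (ds N q)) \<le> real d * T" by (simp add: algebra_simps)
  ultimately show "gs N T k \<le> gs N T p" using g gp psile[of d] by linarith
  assume "k < p"
  then show "gs N T k < gs N T p" using small[of k] p gp psilt[of k] by simp
qed

lemma odd_step:
  assumes N: "N = 2*c+1" "c \<ge> 1"
    and le: "\<And>k. gs N T' k \<le> gs N T' a" and lt: "\<And>k. k < a \<Longrightarrow> gs N T' k < gs N T' a"
    and dsa: "real (ds N a) = T'"
  shows "gs N (T' + c) k \<le> gs N (T' + c) (N*a+c)"
    "k < N*a + c \<Longrightarrow> gs N (T'+c) k < gs N (T' + c) (N*a+c)"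
    "real (ds N (N*a+c)) = T' + c"
proof -
  have N2: "N \<ge> 2" using N by simp
  have cN: "c < N" using N by simp
  let ?G = "gs N T' a"
  have Ga: "gs N T' (Suc a) = ?G" using dsa by (simp add: gs_Suc)
  have top: "gs N (T' + c) (N*a+c) = real N * ?G + real c * (real c + 1) / 2"
    using gs_interp[OF N(1) cN N(2), of "T' + c" a] Ga by (simp add: field_simps)
  define q where "q = k div N"
  define d where "d = k mod N"
  have Npos: "N > 0" using N by simp
  have k: "k = N*q + d" "d < N" using Npos unfolding q_def d_def by auto
  have g: "gs N (T'+c) k = (real N - real d) * gs N T' q + real d * gs N T' (Suc q)
           + (real d * real c - real d * (real d - 1) / 2)"
    using gs_interp[OF N(1) k(2) N(2), of "T' + c" q] k(1) by simp
  have dN: "real N - real d > 0" using k by simp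
  have A: "(real N - real d) * gs N T' q \<le> (real N - real d) * ?G"
    using le[of q] dN by (intro mult_left_mono) auto
  have B: "real d * gs N T' (Suc q) \<le> real d * ?G" using le[of "Suc q"] by (intro mult_left_mono) auto
  have sumG: "(real N - real d)*?G + real d*?G = real N*?G" by (simp add: algebra_simps)
  show "gs N (T' + c) k \<le> gs N (T' + c) (N*a+c)"
    using g top A B psi_le[of d c] sumG by linarith
  show "real (ds N (N*a+c)) = T' + c" using ds_step[OF N2 cN, of a] dsa by simp
  assume kl: "k < N*a + c"
  show "gs N (T'+c) k < gs N (T' + c) (N*a+c)"
  proof (cases "q < a")
    case True
    have "(real N - real d) * gs N T' q < (real N - real d) * ?G"
      using lt[OF True] dN by (intro mult_strict_left_mono) auto
    then show ?thesis using g top B psi_le[of d c] sumG by linarith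
  next
    case False
    have "q \<le> a"
    proof (rule ccontr)
      assume "\<not> q \<le> a"
      then have "N*(a+1) \<le> N*q" by (intro mult_le_mono2) simp
      then show False using kl k cN by simp
    qed
    then have "q = a" "d < c" using False kl k by auto
    then show ?thesis using g top Ga psi_lt[of d c] sumG by simp
  qed
qed


lemma q1: "real d * real c - real d * (real d - 1) / 2 - (2*real c + 1 - real d)/2
   = real c ^ 2 / 2 - (real c - real d + 1)^2 / 2"
  by (simp add: field_simps power2_eq_square)

lemma q2: "real d * real c - real d * (real d - 1) / 2 - real d/2
   = real c ^ 2 / 2 - (real c - real d)^2 / 2"
  by (simp add: field_simps power2_eq_square)

lemma even_step:
  assumes N: "N = 2*c+1" "c \<ge> 1"
    and le: "\<And>k. gs N T' k \<le> gs N T' (Suc b')" and lt: "\<And>k. k < Suc b' \<Longrightarrow> gs N T' k < gs N T' (Suc b')"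
    and dsb: "real (ds N b') = T' - 1/2"
    and Tj: "T' = real j + 1/2"
  shows "gs N (T' + c) k \<le> gs N (T' + c) (Suc (N*b'+c))"
    "k < Suc (N*b' + c) \<Longrightarrow> gs N (T'+c) k < gs N (T' + c) (Suc (N*b'+c))"
    "real (ds N (N*b'+c)) = (T' + c) - 1/2"
proof -
  have N2: "N \<ge> 2" using N by simp
  have cN: "c < N" "Suc c < N" using N by auto
  have rN: "real N = 2 * real c + 1" using N by simp
  let ?G = "gs N T' (Suc b')"
  have Gb: "gs N T' b' = ?G - 1/2" using dsb by (simp add: gs_Suc)
  have "gs N (T' + c) (N*b'+ Suc c) = (real N - real (Suc c)) * (?G - 1/2) + real (Suc c) * ?G
           + (real (Suc c) * real c - real (Suc c) * (real (Suc c) - 1) / 2)"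
    using gs_interp[OF N(1) cN(2) N(2), of "T' + c" b'] Gb by simp
  then have top: "gs N (T' + c) (Suc (N*b'+c)) = real N * ?G + real c ^ 2 / 2"
    by (simp add: rN field_simps power2_eq_square)
  show "real (ds N (N*b'+c)) = (T' + c) - 1/2" using ds_step[OF N2 cN(1), of b'] dsb by simp
  define q where "q = k div N"
  define d where "d = k mod N"
  have Npos: "N > 0" using N by simp
  have k: "k = N*q + d" "d < N" using Npos unfolding q_def d_def by auto
  define u where "u = gs N T' q"
  define v where "v = gs N T' (Suc q)"
  define \<delta> where "\<delta> = T' - real (ds N q)"
  define \<psi> where "\<psi> = real d * real c - real d * (real d - 1) / 2"
  have vu: "v = u + \<delta>" unfolding u_def v_def \<delta>_def by (simp add: gs_Suc)
  have g: "gs N (T'+c) k = (real N - real d) * u + real d * v + \<psi>"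
    using gs_interp[OF N(1) k(2) N(2), of "T' + c" q] k(1) unfolding u_def v_def \<psi>_def by simp
  have dN: "real N - real d > 0" using k by simp
  have hd: "\<delta> \<ge> 1/2 \<or> \<delta> \<le> -1/2"
  proof (cases "ds N q \<le> j")
    case True then have "real (ds N q) \<le> real j" by simp
    then show ?thesis unfolding \<delta>_def Tj by simp
  next
    case False then have "real (ds N q) \<ge> real j + 1" by simp
    then show ?thesis unfolding \<delta>_def Tj by simp
  qed
  have c1: "\<psi> - (real N - real d)/2 \<le> real c ^ 2 / 2" using q1[of d c] rN unfolding \<psi>_def by simp
  have c2: "\<psi> - real d/2 \<le> real c ^ 2 / 2" using q2[of d c] unfolding \<psi>_def by simp
  have e1: "(real N - real d) * u + real d * v = real N * v - (real N - real d) * \<delta>"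
    using vu by (simp add: algebra_simps)
  have e2: "(real N - real d) * u + real d * v = real N * u + real d * \<delta>"
    using vu by (simp add: algebra_simps)
  have main: "gs N (T'+c) k \<le> real N * ?G + real c ^ 2 / 2"
       "q < b' \<Longrightarrow> gs N (T'+c) k < real N * ?G + real c ^ 2 / 2"
  proof -
    have uG: "u \<le> ?G" "v \<le> ?G" unfolding u_def v_def using le by auto
    have strict: "u < ?G \<and> v < ?G" if "q < b'" unfolding u_def v_def using lt that by auto
    { assume h: "\<delta> \<ge> 1/2"
      have "(real N - real d) * \<delta> \<ge> (real N - real d) * (1/2)"
        using h dN by (intro mult_left_mono) auto
      then have *: "gs N (T'+c) k \<le> real N * v + real c ^ 2 / 2" using g e1 c1 by linarith
      have "real N * v \<le> real N * ?G" using uG by (intro mult_left_mono) auto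
      then have "gs N (T'+c) k \<le> real N * ?G + real c ^ 2 / 2" using * by simp
      moreover have "q < b' \<Longrightarrow> gs N (T'+c) k < real N * ?G + real c ^ 2 / 2"
      proof -
        assume "q < b'"
        then have "real N * v < real N * ?G" using strict Npos by (intro mult_strict_left_mono) auto
        then show ?thesis using * by simp
      qed
      ultimately have "gs N (T'+c) k \<le> real N * ?G + real c ^ 2 / 2 \<and>
          (q < b' \<longrightarrow> gs N (T'+c) k < real N * ?G + real c ^ 2 / 2)" by blast }
    moreover
    { assume h: "\<delta> \<le> -1/2"
      have "real d * \<delta> \<le> real d * (-1/2)"
        using h by (intro mult_left_mono) auto
      then have *: "gs N (T'+c) k \<le> real N * u + real c ^ 2 / 2" using g e2 c2 by linarith
      have "real N * u \<le> real N * ?G" using uG by (intro mult_left_mono) auto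
      then have "gs N (T'+c) k \<le> real N * ?G + real c ^ 2 / 2" using * by simp
      moreover have "q < b' \<Longrightarrow> gs N (T'+c) k < real N * ?G + real c ^ 2 / 2"
      proof -
        assume "q < b'"
        then have "real N * u < real N * ?G" using strict Npos by (intro mult_strict_left_mono) auto
        then show ?thesis using * by simp
      qed
      ultimately have "gs N (T'+c) k \<le> real N * ?G + real c ^ 2 / 2 \<and>
          (q < b' \<longrightarrow> gs N (T'+c) k < real N * ?G + real c ^ 2 / 2)" by blast }
    ultimately have "gs N (T'+c) k \<le> real N * ?G + real c ^ 2 / 2 \<and>
          (q < b' \<longrightarrow> gs N (T'+c) k < real N * ?G + real c ^ 2 / 2)" using hd by blast
    then show "gs N (T'+c) k \<le> real N * ?G + real c ^ 2 / 2"
       "q < b' \<Longrightarrow> gs N (T'+c) k < real N * ?G + real c ^ 2 / 2" by auto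
  qed
  show "gs N (T' + c) k \<le> gs N (T' + c) (Suc (N*b'+c))" using main(1) top by simp
  assume kl: "k < Suc (N*b' + c)"
  show "gs N (T'+c) k < gs N (T' + c) (Suc (N*b'+c))"
  proof (cases "q < b'")
    case True then show ?thesis using main(2) top by simp
  next
    case False
    have "q \<le> b'"
    proof (rule ccontr)
      assume "\<not> q \<le> b'"
      then have "N*(b'+1) \<le> N*q" by (intro mult_le_mono2) simp
      then show False using kl k cN by simp
    qed
    then have qb: "q = b'" "d \<le> c" using False kl k by auto
    have uv: "u = ?G - 1/2" "v = ?G" unfolding u_def v_def using Gb qb by auto
    have "gs N (T'+c) k = (real N - real d) * (?G - 1/2) + real d * ?G + \<psi>" using g unfolding uv .
    then have "gs N (T'+c) k = real N * ?G - (real N - real d)/2 + \<psi>" by (simp add: field_simps)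
    moreover have "(real c - real d + 1)^2 > 0" using qb by simp
    ultimately show ?thesis using top q1[of d c] rN unfolding \<psi>_def by simp
  qed
qed


fun Aseq :: "nat \<Rightarrow> nat \<Rightarrow> nat \<Rightarrow> nat \<Rightarrow> nat" where
  "Aseq N c t 0 = t"
| "Aseq N c t (Suc m) = N * Aseq N c t m + c"

lemma Aseq_closed: "N = 2*c+1 \<Longrightarrow> 2 * Aseq N c t m + 1 = (2*t+1) * N^m"
proof (induction m)
  case 0 then show ?case by simp
next
  case (Suc m)
  have "2 * Aseq N c t (Suc m) + 1 = N * (2*Aseq N c t m) + (2*c+1)" by (simp add: algebra_simps)
  also have "\<dots> = N * (2*Aseq N c t m + 1)" by (simp only: Suc.prems[symmetric]) (simp add: algebra_simps)
  also have "\<dots> = N * ((2*t+1) * N^m)" using Suc by simp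
  finally show ?case by (simp add: algebra_simps)
qed

lemma odd_fam:
  assumes N: "N = 2*c+1" "c \<ge> 1" and t: "t \<le> c"
  shows "(\<forall>k. gs N (real c * real m + real t) k \<le> gs N (real c * real m + real t) (Aseq N c t m)) \<and>
         (\<forall>k < Aseq N c t m. gs N (real c * real m + real t) k < gs N (real c * real m + real t) (Aseq N c t m)) \<and>
         real (ds N (Aseq N c t m)) = real c * real m + real t"
proof (induction m)
  case 0
  have N2: "N \<ge> 2" using N by simp
  have tN: "t < N" using N t by simp
  have tt: "real t * real t - real t*(real t - 1)/2 = real t * (real t + 1)/2" by (simp add: field_simps)
  have pl: "real d * real t - real d*(real d - 1)/2 \<le> real t * real t - real t*(real t - 1)/2" for d
    using psi_le[of d t] tt by (simp add: mult.commute)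
  have pt: "real d * real t - real d*(real d - 1)/2 < real t * real t - real t*(real t - 1)/2" if "d < t" for d
    using psi_lt[OF that] tt by (simp add: mult.commute)
  have tT: "real t \<le> real c" using t by simp
  have "gs N (real t) k \<le> gs N (real t) t \<and> (k < t \<longrightarrow> gs N (real t) k < gs N (real t) t)" for k
    using base_le[OF N tT tN pl pt] by blast
  then show ?case using ds_small[OF N2 tN] by simp
next
  case (Suc m)
  let ?T = "real c * real m + real t"
  have eq: "real c * real (Suc m) + real t = ?T + real c" by (simp add: algebra_simps)
  show ?case unfolding eq Aseq.simps
    using odd_step[OF N, of ?T "Aseq N c t m"] Suc by auto
qed

lemma q3: "real d * (real t + 1/2) - real d * (real d - 1) / 2
   = (real t + 1)^2/2 - (real t + 1 - real d)^2 / 2"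
  by (simp add: field_simps power2_eq_square)

lemma even_fam:
  assumes N: "N = 2*c+1" "c \<ge> 1" and t: "t + 1 \<le> c"
  shows "(\<forall>k. gs N (real c * real m + real t + 1/2) k \<le> gs N (real c * real m + real t + 1/2) (Suc (Aseq N c t m))) \<and>
         (\<forall>k < Suc (Aseq N c t m). gs N (real c * real m + real t + 1/2) k < gs N (real c * real m + real t + 1/2) (Suc (Aseq N c t m))) \<and>
         real (ds N (Aseq N c t m)) = real c * real m + real t"
proof (induction m)
  case 0
  have N2: "N \<ge> 2" using N by simp
  have tN: "Suc t < N" "t < N" using N t by auto
  have pl: "real d * (real t + 1/2) - real d * (real d - 1) / 2 \<le>
      real (Suc t) * (real t + 1/2) - real (Suc t) * (real (Suc t) - 1) / 2" for d
  proof -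
    have "real (Suc t) * (real t + 1/2) - real (Suc t) * (real (Suc t) - 1)/2 = (real t + 1)^2/2"
      by (simp add: field_simps power2_eq_square)
    moreover have "(real t + 1 - real d)^2 \<ge> 0" by simp
    ultimately show ?thesis using q3[of d t] by linarith
  qed
  have pt: "real d * (real t + 1/2) - real d * (real d - 1) / 2 <
      real (Suc t) * (real t + 1/2) - real (Suc t) * (real (Suc t) - 1) / 2" if "d < Suc t" for d
  proof -
    have "(real t + 1 - real d)^2 > 0" using that by simp
    moreover have "real (Suc t) * (real t + 1/2) - real (Suc t) * (real (Suc t) - 1)/2 = (real t + 1)^2/2"
      by (simp add: field_simps power2_eq_square)
    ultimately show ?thesis using q3[of d t] by linarith
  qed
  have "gs N (real t + 1/2) k \<le> gs N (real t + 1/2) (Suc t) \<and> (k < Suc t \<longrightarrow> gs N (real t + 1/2) k < gs N (real t + 1/2) (Suc t))" for k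
  proof -
    have tT: "real t + 1/2 \<le> real c" using t by simp
    show ?thesis using base_le[OF N tT tN(1) pl pt] by blast
  qed
  then show ?case using ds_small[OF N2 tN(2)] by simp
next
  case (Suc m)
  let ?T = "real c * real m + real t + 1/2"
  have eq: "real c * real (Suc m) + real t + 1/2 = ?T + real c" by (simp add: algebra_simps)
  have Tj: "?T = real (c*m+t) + 1/2" by simp
  have le: "\<And>k. gs N ?T k \<le> gs N ?T (Suc (Aseq N c t m))" using Suc by blast
  have lt: "\<And>k. k < Suc (Aseq N c t m) \<Longrightarrow> gs N ?T k < gs N ?T (Suc (Aseq N c t m))" using Suc by blast
  have dsb: "real (ds N (Aseq N c t m)) = ?T - 1/2" using Suc by simp
  note E = even_step[OF N le lt dsb Tj]
  show ?case unfolding eq Aseq.simps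
  proof (intro conjI allI impI)
    fix k show "gs N (?T + real c) k \<le> gs N (?T + real c) (Suc (N * Aseq N c t m + c))" by (rule E(1))
  next
    fix k assume "k < Suc (N * Aseq N c t m + c)"
    then show "gs N (?T + real c) k < gs N (?T + real c) (Suc (N * Aseq N c t m + c))" using E(2) by blast
  next
    show "real (ds N (N * Aseq N c t m + c)) = real c * real (Suc m) + real t"
      using E(3) by (simp add: algebra_simps)
  qed
qed



definition hd :: "nat \<Rightarrow> nat \<Rightarrow> nat \<Rightarrow> nat" where
  "hd N a b = (LEAST j. a div N^j = b div N^j)"

lemma hdist_Suc: "hdist N (Suc a) (Suc b) = hd N a b" by (simp add: hdist_def hd_def)

lemma hd_sym: "hd N a b = hd N b a" unfolding hd_def by (simp add: eq_commute)

lemma hd_ex: fixes a b N :: nat assumes "N \<ge> 2" shows "\<exists>j. a div N^j = b div N^j"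
proof -
  have "a < N^(a+b)" "b < N^(a+b)"
  proof -
    have "(2::nat)^(a+b) \<le> N^(a+b)" using assms by (intro power_mono) auto
    moreover have "a + b < 2^(a+b)" by (rule less_exp)
    ultimately show "a < N^(a+b)" "b < N^(a+b)" by linarith+
  qed
  then show ?thesis by (intro exI[of _ "a+b"]) simp
qed

lemma hd_le: "a < N^n \<Longrightarrow> b < N^n \<Longrightarrow> hd N a b \<le> n"
  unfolding hd_def by (rule Least_le) simp

lemma hd_pos: assumes "N \<ge> 2" "a \<noteq> b" shows "hd N a b \<ge> 1"
proof (rule ccontr)
  assume "\<not> hd N a b \<ge> 1"
  then have "hd N a b = 0" by simp
  moreover have "a div N^(hd N a b) = b div N^(hd N a b)"
    unfolding hd_def by (rule LeastI_ex[OF hd_ex[OF assms(1)]])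
  ultimately show False using assms by simp
qed

lemma div_blk: "(d::nat) < N \<Longrightarrow> (N*q+d) div N = q"
  by (simp add: div_add1_eq)

lemma ne_blocks: "(a'::nat) \<noteq> q \<Longrightarrow> e < N \<Longrightarrow> d < N \<Longrightarrow> N*a'+e \<noteq> N*q+d"
  using div_blk[of e N a'] div_blk[of d N q] by metis

lemma hd_step_ne:
  assumes N: "N \<ge> 2" and e: "e < N" and d: "d < N" and ne: "a' \<noteq> x'"
  shows "hd N (N*a'+e) (N*x'+d) = Suc (hd N a' x')"
proof -
  obtain n where n: "(N*a'+e) div N^n = (N*x'+d) div N^n" using hd_ex[OF N] by blast
  obtain m where m: "a' div N^m = x' div N^m" using hd_ex[OF N] by blast
  have P0: "\<not> ((N*a'+e) div N^0 = (N*x'+d) div N^0)" using ne_blocks[OF ne e d] by simp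
  have PS: "\<forall>k. ((N*a'+e) div N^(Suc k) = (N*x'+d) div N^(Suc k)) = (a' div N^k = x' div N^k)"
  proof
    fix k
    have "(N*a'+e) div N^(Suc k) = (N*a'+e) div N div N^k" by (simp add: div_mult2_eq)
    moreover have "(N*x'+d) div N^(Suc k) = (N*x'+d) div N div N^k" by (simp add: div_mult2_eq)
    ultimately show "((N*a'+e) div N^(Suc k) = (N*x'+d) div N^(Suc k)) = (a' div N^k = x' div N^k)"
      using e d by simp
  qed
  show ?thesis unfolding hd_def by (rule Least_Suc2[OF n m P0 PS])
qed

lemma hd_step_eq:
  assumes N: "N \<ge> 2" and e: "e < N" and d: "d < N" and ne: "e \<noteq> d"
  shows "hd N (N*q+e) (N*q+d) = 1"
  unfolding hd_def
proof (rule Least_equality)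
  show "(N*q+e) div N^1 = (N*q+d) div N^1" using e d by simp
  fix y assume "(N*q+e) div N^y = (N*q+d) div N^y"
  then show "1 \<le> y" using ne by (cases y) auto
qed

definition phi :: "nat \<Rightarrow> real \<Rightarrow> nat \<Rightarrow> nat \<Rightarrow> real" where
  "phi N t a x = (if a = x then 0 else t / real N ^ hd N a x)"

lemma phi_ne:
  assumes N: "N \<ge> 2" and e: "e < N" and d: "d < N" and ne: "a' \<noteq> x'"
  shows "phi N t (N*a'+e) (N*x'+d) = phi N t a' x' / real N"
  using ne_blocks[OF ne e d] ne hd_step_ne[OF assms] by (simp add: phi_def)

lemma phi_eq:
  assumes N: "N \<ge> 2" and e: "e < N" and d: "d < N"
  shows "phi N t (N*q+e) (N*q+d) = (if e = d then 0 else t / real N)"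
  using hd_step_eq[OF N e d] by (simp add: phi_def)

lemma inner_ne:
  assumes N: "N \<ge> 2" and d: "d < N" and ne: "a' \<noteq> x'"
  shows "(\<Sum>e<N. phi N t (N*a'+e) (N*x'+d)) = phi N t a' x'"
proof -
  have "(\<Sum>e<N. phi N t (N*a'+e) (N*x'+d)) = (\<Sum>e<N. phi N t a' x' / real N)"
    using phi_ne[OF N _ d ne] by (intro sum.cong) auto
  then show ?thesis using N by simp
qed

lemma inner_eq:
  assumes N: "N \<ge> 2" and d: "d < N"
  shows "(\<Sum>e<N. phi N t (N*q+e) (N*q+d)) = (real N - 1) * t / real N"
proof -
  have "(\<Sum>e<N. phi N t (N*q+e) (N*q+d)) = (\<Sum>e<N. t / real N - (if e = d then t / real N else 0))"
    using phi_eq[OF N _ d] by (intro sum.cong) auto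
  also have "\<dots> = real N * (t / real N) - t / real N" using d by (simp add: sum_subtractf)
  finally show ?thesis using N by (simp add: field_simps)
qed

lemma S_formula: assumes N: "N \<ge> 2" shows "(\<Sum>a<x. phi N t a x) = t / real N * real (ds N x)"
proof (induction x rule: less_induct)
  case (less x)
  show ?case
  proof (cases "x = 0")
    case True then show ?thesis by simp
  next
    case False
    define q where "q = x div N"
    define d where "d = x mod N"
    have x: "x = N*q + d" "d < N" using N unfolding q_def d_def by auto
    have qx: "q < x" using False N unfolding q_def by simp
    have "(\<Sum>a<x. phi N t a x) = (\<Sum>a'<q. \<Sum>e<N. phi N t (N*a'+e) (N*q+d)) + (\<Sum>e<d. phi N t (N*q+e) (N*q+d))"
      unfolding x(1) by (rule sum_blocks)
    also have "(\<Sum>a'<q. \<Sum>e<N. phi N t (N*a'+e) (N*q+d)) = (\<Sum>a'<q. phi N t a' q)"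
      using inner_ne[OF N x(2)] by (intro sum.cong) auto
    also have "(\<Sum>e<d. phi N t (N*q+e) (N*q+d)) = (\<Sum>e<d. t / real N)"
      using phi_eq[OF N _ x(2)] x(2) by (intro sum.cong) auto
    finally show ?thesis using less[OF qx] ds_step[OF N x(2), of q] x(1) by (simp add: add_divide_distrib distrib_left)
  qed
qed

lemma Tot_formula: assumes N: "N \<ge> 2" shows "x < N^n \<Longrightarrow> (\<Sum>a<N^n. phi N t a x) = real n * (real N - 1) * t / real N"
proof (induction n arbitrary: x)
  case 0 then show ?case by (simp add: phi_def)
next
  case (Suc n)
  define q where "q = x div N"
  define d where "d = x mod N"
  have x: "x = N*q + d" "d < N" using N unfolding q_def d_def by auto
  have q: "q < N^n" using Suc.prems N unfolding q_def by (simp add: div_less_iff_less_mult mult.commute)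
  have "(\<Sum>a<N^Suc n. phi N t a x) = (\<Sum>a'<N^n. \<Sum>e<N. phi N t (N*a'+e) (N*q+d)) + (\<Sum>e<0. phi N t (N*(N^n)+e) (N*q+d))"
    using sum_blocks[where N=N and q="N^n" and d=0 and f="\<lambda>a. phi N t a x"] x(1) by simp
  also have "\<dots> = (\<Sum>a'<N^n. phi N t a' q + (if a' = q then (real N - 1) * t / real N else 0))"
    using inner_ne[OF N x(2)] inner_eq[OF N x(2)] by (simp, intro sum.cong) (auto simp: phi_def)
  also have "\<dots> = real n * (real N - 1) * t / real N + (real N - 1) * t / real N"
    using Suc.IH[OF q] q by (simp add: sum.distrib)
  moreover have "real (Suc n) * (real N - 1) * t / real N = real n * (real N - 1) * t / real N + (real N - 1) * t / real N"
    by (simp only: of_nat_Suc distrib_right mult_1_left add_divide_distrib)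
  ultimately show ?case by simp
qed



lemma gamma_diff: "v < w \<Longrightarrow> gamma (Suc k) v * gamma (Suc k) w - gamma k v * gamma k w
   = (if w = Suc k then 2 else 0) + (if v = Suc k then -2 else 0)"
  by (auto simp: gamma_def)

lemma pair_diff:
  assumes kL: "Suc k \<le> L"
  shows "(\<Sum>v\<in>{1..L}. \<Sum>w\<in>{v<..L}. F v w * gamma (Suc k) v * gamma (Suc k) w)
       - (\<Sum>v\<in>{1..L}. \<Sum>w\<in>{v<..L}. F v w * gamma k v * gamma k w)
       = 2*(\<Sum>v\<in>{1..k}. F v (Suc k)) - 2*(\<Sum>w\<in>{Suc k<..L}. F (Suc k) w)"
proof -
  have "(\<Sum>v\<in>{1..L}. \<Sum>w\<in>{v<..L}. F v w * gamma (Suc k) v * gamma (Suc k) w)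
       - (\<Sum>v\<in>{1..L}. \<Sum>w\<in>{v<..L}. F v w * gamma k v * gamma k w)
     = (\<Sum>v\<in>{1..L}. \<Sum>w\<in>{v<..L}. F v w * gamma (Suc k) v * gamma (Suc k) w - F v w * gamma k v * gamma k w)"
    by (simp add: sum_subtractf)
  also have "\<dots> = (\<Sum>v\<in>{1..L}. \<Sum>w\<in>{v<..L}. (if w = Suc k then 2 * F v (Suc k) else 0) + (if v = Suc k then -2 * F v w else 0))"
  proof (intro sum.cong refl)
    fix v w assume "w \<in> {v<..L}"
    then have "v < w" by simp
    have "F v w * gamma (Suc k) v * gamma (Suc k) w - F v w * gamma k v * gamma k w
        = F v w * (gamma (Suc k) v * gamma (Suc k) w - gamma k v * gamma k w)" by (simp add: algebra_simps)
    also have "\<dots> = (if w = Suc k then 2 * F v (Suc k) else 0) + (if v = Suc k then -2 * F v w else 0)"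
      using gamma_diff[OF \<open>v < w\<close>, of k] by auto
    finally show "F v w * gamma (Suc k) v * gamma (Suc k) w - F v w * gamma k v * gamma k w
        = (if w = Suc k then 2 * F v (Suc k) else 0) + (if v = Suc k then -2 * F v w else 0)" .
  qed
  also have "\<dots> = (\<Sum>v\<in>{1..L}. (if v < Suc k then 2 * F v (Suc k) else 0)) + (\<Sum>v\<in>{1..L}. if v = Suc k then -2 * (\<Sum>w\<in>{v<..L}. F v w) else 0)"
  proof -
    have "(\<Sum>w\<in>{v<..L}. (if w = Suc k then 2 * F v (Suc k) else 0) + (if v = Suc k then -2 * F v w else 0))
       = (if v < Suc k then 2 * F v (Suc k) else 0) + (if v = Suc k then -2 * (\<Sum>w\<in>{v<..L}. F v w) else 0)" for v
      using kL by (simp add: sum.distrib sum_distrib_left)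
    then show ?thesis by (simp add: sum.distrib)
  qed
  also have "(\<Sum>v\<in>{1..L}. (if v < Suc k then 2 * F v (Suc k) else 0)) = (\<Sum>v\<in>{v\<in>{1..L}. v < Suc k}. 2 * F v (Suc k))"
    by (rule sum.inter_filter[symmetric]) simp
  also have "{v\<in>{1..L}. v < Suc k} = {1..k}" using kL by auto
  also have "(\<Sum>v\<in>{1..L}. if v = Suc k then -2 * (\<Sum>w\<in>{v<..L}. F v w) else 0) = -2 * (\<Sum>w\<in>{Suc k<..L}. F (Suc k) w)"
    using kL by simp
  finally show ?thesis by (simp add: sum_distrib_left sum_negf)
qed

lemma field_diff: assumes kL: "Suc k \<le> L"
  shows "(\<Sum>v\<in>{1..L}. gamma (Suc k) v) - (\<Sum>v\<in>{1..L}. gamma k v) = 2"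
proof -
  have "(\<Sum>v\<in>{1..L}. gamma (Suc k) v) - (\<Sum>v\<in>{1..L}. gamma k v) = (\<Sum>v\<in>{1..L}. if v = Suc k then 2 else 0)"
    unfolding sum_subtractf[symmetric] by (intro sum.cong) (auto simp: gamma_def)
  then show ?thesis using kL by simp
qed

lemma hamil_diff:
  assumes kL: "Suc k \<le> N^n"
  shows "hamil N n J h (gamma (Suc k)) - hamil N n J h (gamma k)
     = - (\<Sum>v\<in>{1..k}. J (hdist N v (Suc k))) + (\<Sum>w\<in>{Suc k<..N^n}. J (hdist N (Suc k) w)) - h"
  using pair_diff[OF kL, of "\<lambda>v w. J (hdist N v w)"] field_diff[OF kL]
  unfolding hamil_def by (simp add: algebra_simps)



lemma J_hd:
  assumes N: "N \<ge> 2" and J: "\<forall>i\<in>{1..n}. J i = Jt / real N ^ i"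
    and a: "a < N^n" and b: "b < N^n" and ne: "a \<noteq> b"
  shows "J (hd N a b) = phi N Jt a b"
proof -
  have "hd N a b \<in> {1..n}" using hd_pos[OF N ne] hd_le[OF a b] by simp
  then show ?thesis using J ne by (simp add: phi_def)
qed

lemma A_eq:
  assumes N: "N \<ge> 2" and J: "\<forall>i\<in>{1..n}. J i = Jt / real N ^ i" and k: "k < N^n"
  shows "(\<Sum>v\<in>{1..k}. J (hdist N v (Suc k))) = (\<Sum>a<k. phi N Jt a k)"
proof -
  have "(\<Sum>v\<in>{1..k}. J (hdist N v (Suc k))) = (\<Sum>a<k. J (hdist N (Suc a) (Suc k)))"
    using sum.atLeast1_atMost_eq[of "\<lambda>v. J (hdist N v (Suc k))" k] by simp
  also have "\<dots> = (\<Sum>a<k. phi N Jt a k)"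
    using J_hd[OF N J _ k] k by (intro sum.cong) (auto simp: hdist_Suc)
  finally show ?thesis .
qed

lemma B_eq:
  assumes N: "N \<ge> 2" and J: "\<forall>i\<in>{1..n}. J i = Jt / real N ^ i" and k: "k < N^n"
  shows "(\<Sum>w\<in>{Suc k<..N^n}. J (hdist N (Suc k) w)) = (\<Sum>b\<in>{k<..<N^n}. phi N Jt b k)"
proof -
  have set: "{Suc k<..N^n} = Suc ` {k<..<N^n}"
  proof
    show "{Suc k<..N^n} \<subseteq> Suc ` {k<..<N^n}"
    proof
      fix x assume "x \<in> {Suc k<..N^n}"
      then have "x = Suc (x - 1)" "x - 1 \<in> {k<..<N^n}" by auto
      then show "x \<in> Suc ` {k<..<N^n}" by blast
    qed
  qed auto
  have "(\<Sum>w\<in>{Suc k<..N^n}. J (hdist N (Suc k) w)) = (\<Sum>b\<in>{k<..<N^n}. J (hdist N (Suc k) (Suc b)))"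
    unfolding set by (simp add: sum.reindex)
  also have "\<dots> = (\<Sum>b\<in>{k<..<N^n}. phi N Jt b k)"
  proof (intro sum.cong refl)
    fix b assume b: "b \<in> {k<..<N^n}"
    have "J (hdist N (Suc k) (Suc b)) = J (hd N b k)" by (simp add: hdist_Suc hd_sym)
    also have "\<dots> = phi N Jt b k" using J_hd[OF N J _ k, of b] b by auto
    finally show "J (hdist N (Suc k) (Suc b)) = phi N Jt b k" .
  qed
  finally show ?thesis .
qed

lemma split3:
  assumes "f k = (0::real)" "(k::nat) < L"
  shows "(\<Sum>b<L. f b) = (\<Sum>b<k. f b) + (\<Sum>b\<in>{k<..<L}. f b)"
proof -
  have "(\<Sum>b<L. f b) = (\<Sum>b<L. (if b < k then f b else 0) + (if k < b then f b else 0))"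
  proof (intro sum.cong refl)
    fix b show "f b = (if b < k then f b else 0) + (if k < b then f b else 0)"
      using assms(1) by (cases b k rule: linorder_cases) auto
  qed
  also have "\<dots> = (\<Sum>b\<in>{b\<in>{..<L}. b < k}. f b) + (\<Sum>b\<in>{b\<in>{..<L}. k < b}. f b)"
    by (simp only: sum.distrib sum.inter_filter[OF finite_lessThan])
  also have "{b\<in>{..<L}. b < k} = {..<k}" using assms by auto
  also have "{b\<in>{..<L}. k < b} = {k<..<L}" by auto
  finally show ?thesis .
qed

lemma H_step:
  assumes N: "N \<ge> 2" and J: "\<forall>i\<in>{1..n}. J i = Jt / real N ^ i" and k: "k < N^n"
  shows "hamil N n J h (gamma (Suc k)) - hamil N n J h (gamma k)
      = real n * (real N - 1) * Jt / real N - 2 * (Jt / real N * real (ds N k)) - h"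
proof -
  have kL: "Suc k \<le> N^n" using k by simp
  have tot: "(\<Sum>b<N^n. phi N Jt b k) = (\<Sum>b<k. phi N Jt b k) + (\<Sum>b\<in>{k<..<N^n}. phi N Jt b k)"
    by (rule split3) (auto simp: phi_def k)
  show ?thesis
    using hamil_diff[OF kL, of J h] A_eq[OF N J k] B_eq[OF N J k] tot Tot_formula[OF N k, of Jt]
      S_formula[OF N, of Jt k] by simp
qed



lemma maxlem:
  fixes H :: "nat \<Rightarrow> real"
  assumes Hk: "\<And>k. k \<le> L \<Longrightarrow> H k = H0 + K * g k" and K: "K > 0"
    and le: "\<And>k. g k \<le> g p" and lt: "\<And>k. k < p \<Longrightarrow> g k < g p"
    and pp: "p' \<in> {1..M}" "H p' = H p" and hML: "M \<le> L" and pL: "p \<le> L"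
  shows "H p = Max (H ` {1..M})" "\<forall>i<p. H i < H p"
proof -
  have "Max (H ` {1..M}) = H p"
  proof (rule Max_eqI)
    show "finite (H ` {1..M})" by simp
    fix y assume "y \<in> H ` {1..M}"
    then obtain i where i: "i \<in> {1..M}" "y = H i" by auto
    have "K * g i \<le> K * g p" using K le[of i] by (intro mult_left_mono) auto
    then show "y \<le> H p" using i Hk[of i] Hk[OF pL] hML by simp
  next
    show "H p \<in> H ` {1..M}" using pp by (metis image_eqI)
  qed
  then show "H p = Max (H ` {1..M})" by simp
  show "\<forall>i<p. H i < H p"
  proof (intro allI impI)
    fix i assume "i < p"
    then have "K * g i < K * g p" using K lt[of i] by (intro mult_strict_left_mono) auto
    then show "H i < H p" using \<open>i < p\<close> Hk[of i] Hk[OF pL] pL by simp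
  qed
qed

theorem proposition4p6:
  fixes N n m s :: nat and Jt :: real and J :: "nat \<Rightarrow> real" and H :: "nat \<Rightarrow> real"
  assumes "N \<ge> 3" and "odd N" and "n \<ge> 1" and "Jt > 0"
    and "\<forall>i\<in>{1..n}. J i = Jt / real N ^ i"
    and "m \<le> n - 1" and "1 \<le> s" and "s \<le> N"
    and H_def: "\<forall>i. H i = hamil N n J (hfield N n Jt m s) (gamma i)"
  shows "(odd s \<longrightarrow>
            (let a = s * N ^ m div 2 in
              H a = H (a + 1) \<and>
              H a = Max (H ` {1..s * N ^ m}) \<and>
              H a = Max (H ` {1..N ^ n}) \<and>
              (\<forall>i<a. H i < H a))) \<and>
         (even s \<longrightarrow>
            (let b = (s - 1) * N ^ m div 2 + 1 in
              H b = Max (H ` {1..s * N ^ m}) \<and>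
              H b = Max (H ` {1..N ^ n}) \<and>
              (\<forall>i<b. H i < H b)))"
proof -
  note J = assms(5)
  obtain c where N: "N = 2*c+1" using assms(2) oddE by blast
  have c1: "c \<ge> 1" using assms(1) N by simp
  have N2: "N \<ge> 2" using assms(1) by simp
  define L where "L = N^n"
  define T where "T = real c * real m + (real s - 1)/2"
  define K where "K = 2 * Jt / real N"
  have K: "K > 0" using assms(4) N unfolding K_def by simp
  have hN: "real N = 2 * real c + 1" using N by simp
  have hT: "real n * (real N - 1) * Jt / real N - hfield N n Jt m s = K * T"
  proof -
    have N0: "real N \<noteq> 0" using N by simp
    have X: "real n * (real N - 1) * Jt / real N - hfield N n Jt m s
        = Jt * ((real N - 1) * real m + real s - 1) / real N"
      unfolding hfield_def using N0 by (simp add: field_simps)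
    have e: "(real N - 1) = 2 * real c" using hN by simp
    have Y: "Jt * ((real N - 1) * real m + real s - 1) / real N = K * T"
      unfolding K_def T_def e using N0 by (simp add: field_simps)
    show ?thesis using X Y by simp
  qed
  have Hk: "H k = H 0 + K * gs N T k" if "k \<le> L" for k
    using that
  proof (induction k)
    case 0 then show ?case by (simp add: gs_def)
  next
    case (Suc k)
    have kL: "k < N^n" using Suc.prems unfolding L_def by simp
    have st: "H (Suc k) - H k = real n * (real N - 1) * Jt / real N - 2 * (Jt / real N * real (ds N k)) - hfield N n Jt m s"
      using H_step[OF N2 J kL, of "hfield N n Jt m s"] H_def by simp
    have kd: "K * real (ds N k) = 2 * (Jt / real N * real (ds N k))" unfolding K_def by simp
    have "K * (T - real (ds N k)) = K * T - K * real (ds N k)" by (simp add: right_diff_distrib)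
    then have "H (Suc k) - H k = K * (T - real (ds N k))" using st kd hT by linarith
    then show ?case using Suc by (simp add: gs_Suc algebra_simps)
  qed
  have sL: "s * N^m \<le> L"
  proof -
    have "s * N^m \<le> N * N^m" using assms(8) by simp
    also have "\<dots> = N^(Suc m)" by simp
    also have "\<dots> \<le> N^n" using assms(3,6) N2 by (intro power_increasing) auto
    finally show ?thesis unfolding L_def .
  qed
  have odd_part: "odd s \<longrightarrow>
            (let a = s * N ^ m div 2 in
              H a = H (a + 1) \<and>
              H a = Max (H ` {1..s * N ^ m}) \<and>
              H a = Max (H ` {1..N ^ n}) \<and>
              (\<forall>i<a. H i < H a))"
  proof
    assume "odd s"
    then obtain t where s: "s = 2*t+1" using oddE by blast
    have t: "t \<le> c" using assms(8) s N by simp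
    define a where "a = Aseq N c t m"
    have cl: "2 * a + 1 = s * N^m" using Aseq_closed[OF N, of t m] s unfolding a_def by simp
    have adef: "s * N ^ m div 2 = a" using cl by presburger
    have TT: "T = real c * real m + real t" unfolding T_def s by simp
    have F: "\<And>k. gs N T k \<le> gs N T a" "\<And>k. k < a \<Longrightarrow> gs N T k < gs N T a" "real (ds N a) = T"
      using odd_fam[OF N c1 t, of m] unfolding a_def TT by auto
    have aL: "a + 1 \<le> L" using cl sL by simp
    have Heq: "H a = H (a+1)" using Hk[of a] Hk[of "a+1"] aL F(3) by (simp add: gs_Suc)
    have m1: "H a = Max (H ` {1..s*N^m})" "\<forall>i<a. H i < H a"
      using maxlem[of L H "H 0" K "gs N T" a "a+1" "s*N^m", OF Hk K F(1) F(2)] Heq cl aL sL by auto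
    have m2: "H a = Max (H ` {1..N^n})"
      using maxlem[of L H "H 0" K "gs N T" a "a+1" "L", OF Hk K F(1) F(2)] Heq aL unfolding L_def by auto
    show "let a = s * N ^ m div 2 in
              H a = H (a + 1) \<and>
              H a = Max (H ` {1..s * N ^ m}) \<and>
              H a = Max (H ` {1..N ^ n}) \<and>
              (\<forall>i<a. H i < H a)" unfolding adef Let_def using Heq m1 m2 by blast
  qed
  have even_part: "even s \<longrightarrow>
            (let b = (s - 1) * N ^ m div 2 + 1 in
              H b = Max (H ` {1..s * N ^ m}) \<and>
              H b = Max (H ` {1..N ^ n}) \<and>
              (\<forall>i<b. H i < H b))"
  proof
    assume "even s"
    then obtain u where u: "s = 2*u" using evenE by blast
    define t where "t = u - 1"
    have s: "s = 2*t+2" using u assms(7) unfolding t_def by simp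
    have t: "t + 1 \<le> c" using assms(8) s N by simp
    define a where "a = Aseq N c t m"
    have cl: "2 * a + 1 = (s - 1) * N^m" using Aseq_closed[OF N, of t m] s unfolding a_def by simp
    have bdef: "(s - 1) * N ^ m div 2 + 1 = Suc a" using cl by presburger
    have TT: "T = real c * real m + real t + 1/2" unfolding T_def s by simp
    have F: "\<And>k. gs N T k \<le> gs N T (Suc a)" "\<And>k. k < Suc a \<Longrightarrow> gs N T k < gs N T (Suc a)"
      using even_fam[OF N c1 t, of m] unfolding a_def TT by auto
    have sm: "(s - 1) * N^m \<le> s * N^m" by simp
    have aL: "Suc a \<le> s * N^m" using cl sm by linarith
    have m1: "H (Suc a) = Max (H ` {1..s*N^m})" "\<forall>i<Suc a. H i < H (Suc a)"
      using maxlem[of L H "H 0" K "gs N T" "Suc a" "Suc a" "s*N^m", OF Hk K F(1) F(2)] aL sL by auto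
    have m2: "H (Suc a) = Max (H ` {1..N^n})"
      using maxlem[of L H "H 0" K "gs N T" "Suc a" "Suc a" "L", OF Hk K F(1) F(2)] aL sL unfolding L_def by auto
    show "let b = (s - 1) * N ^ m div 2 + 1 in
              H b = Max (H ` {1..s * N ^ m}) \<and>
              H b = Max (H ` {1..N ^ n}) \<and>
              (\<forall>i<b. H i < H b)" unfolding bdef Let_def using m1 m2 by blast
  qed
  show ?thesis using odd_part even_part by blast
qed


end
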